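(* Let $\mathcal{B}=\bigcup_{s>0}\mathcal{B}_s$, where $\mathcal{B}_s$ is the set of irrational real numbers satisfying the one-dimensional Bruno-$s$ condition. Then $\mathcal{B}$ is invariant under the action of $PSL(2,\mathbb{Z})$: for all integers $a,b,c,d$ with $ad-bc=1$ and all $\omega\in\mathcal{B}$, $(a\omega+b)/(c\omega+d)\in\mathcal{B}$.
   Context: For an irrational real $\omega$, let $(q_j)_{j\ge0}$ be the denominators of the continued fraction convergents of $\omega$ (equivalently of its fractional part): $q_{-1}=0$, $q_0=1$, $q_{k+1}=a_{k+1}q_k+q_{k-1}$ with $(a_k)$ the partial quotients. $\omega$ satisfies the one-dimensional Bruno-$s$ condition ($s>0$) if $\limsup_{N\to+\infty}\big(\sum_{j=0}^{k(N)}\frac{\log q_{j+1}}{q_j}-s\log N\big)<+\infty$, where $k(N)$ is defined by $q_{k(N)}\le N<q_{k(N)+1}$. *)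

theory Defs
  imports "HOL-Analysis.Analysis" "HOL-Library.Liminf_Limsup"
begin

text \<open>Complete quotients of the continued fraction expansion:
  x_0 = omega, x_(n+1) = 1 / frac(x_n).  Partial quotients a_n = floor x_n.\<close>
fun cf_rem :: "real \<Rightarrow> nat \<Rightarrow> real" where
  "cf_rem \<omega> 0 = \<omega>"
| "cf_rem \<omega> (Suc n) = 1 / frac (cf_rem \<omega> n)"

definition cf_a :: "real \<Rightarrow> nat \<Rightarrow> nat" where
  "cf_a \<omega> n = nat \<lfloor>cf_rem \<omega> n\<rfloor>"

text \<open>Denominators of convergents: q_(-1) = 0, q_0 = 1, q_(k+1) = a_(k+1) q_k + q_(k-1).\<close>
fun cf_q :: "real \<Rightarrow> nat \<Rightarrow> nat" where
  "cf_q \<omega> 0 = 1"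
| "cf_q \<omega> (Suc 0) = cf_a \<omega> 1 * 1 + 0"
| "cf_q \<omega> (Suc (Suc n)) = cf_a \<omega> (Suc (Suc n)) * cf_q \<omega> (Suc n) + cf_q \<omega> n"

definition cf_k :: "real \<Rightarrow> nat \<Rightarrow> nat" where
  "cf_k \<omega> N = (THE k. cf_q \<omega> k \<le> N \<and> N < cf_q \<omega> (Suc k))"

definition bruno_s :: "real \<Rightarrow> real \<Rightarrow> bool" where
  "bruno_s s \<omega> \<longleftrightarrow> \<omega> \<notin> \<rat> \<and>
     limsup (\<lambda>N::nat. ereal ((\<Sum>j=0..cf_k \<omega> N. ln (real (cf_q \<omega> (Suc j))) / real (cf_q \<omega> j))
                               - s * ln (real N))) < \<infinity>"

definition bruno_set :: "real set" where
  "bruno_set = (\<Union>s\<in>{s. s > 0}. {\<omega>. bruno_s s \<omega>})"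

end

theory Submission
  imports Defs
begin

lemma irr_not_int: "(x::real) \<notin> \<rat> \<Longrightarrow> x \<notin> \<int>"
  using Ints_subset_Rats by blast

lemma frac_irr: assumes "(x::real) \<notin> \<rat>" shows "frac x \<notin> \<rat>"
proof
  assume "frac x \<in> \<rat>"
  hence "frac x + of_int \<lfloor>x\<rfloor> \<in> \<rat>" by (simp add: Rats_add)
  thus False using assms by (simp add: frac_def)
qed

lemma inv_frac_irr: assumes "(x::real) \<notin> \<rat>" shows "1 / frac x \<notin> \<rat>"
proof
  assume "1 / frac x \<in> \<rat>"
  hence "1 / (1 / frac x) \<in> \<rat>" using Rats_divide Rats_1 by blast
  hence "frac x \<in> \<rat>" by simp
  thus False using frac_irr[OF assms] by simp
qed

lemma cf_rem_irr: "\<omega> \<notin> \<rat> \<Longrightarrow> cf_rem \<omega> n \<notin> \<rat>"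
  by (induction n) (use inv_frac_irr in auto)

lemma inv_frac_gt1: assumes "(x::real) \<notin> \<rat>" shows "1 / frac x > 1"
proof -
  have "frac x > 0" using irr_not_int[OF assms] by simp
  moreover have "frac x < 1" by (rule frac_lt_1)
  ultimately show ?thesis by simp
qed

lemma cf_rem_gt1: "\<omega> \<notin> \<rat> \<Longrightarrow> n \<ge> 1 \<Longrightarrow> cf_rem \<omega> n > 1"
  by (cases n) (use inv_frac_gt1 cf_rem_irr in auto)

lemma cf_a_ge1: "\<omega> \<notin> \<rat> \<Longrightarrow> n \<ge> 1 \<Longrightarrow> cf_a \<omega> n \<ge> 1"
  using cf_rem_gt1[of \<omega> n] unfolding cf_a_def by linarith

lemma cf_q_ge1: "\<omega> \<notin> \<rat> \<Longrightarrow> cf_q \<omega> n \<ge> 1"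
proof (induction n rule: cf_q.induct)
  case (1 \<omega>) then show ?case by simp
next
  case (2 \<omega>) then show ?case using cf_a_ge1[of \<omega> 1] by auto
next
  case (3 \<omega> n) then show ?case by simp
qed

lemma cf_q_SS: "cf_q \<omega> (Suc (Suc n)) = cf_a \<omega> (Suc (Suc n)) * cf_q \<omega> (Suc n) + cf_q \<omega> n"
  by simp

lemma cf_q_grow: "\<omega> \<notin> \<rat> \<Longrightarrow> cf_q \<omega> (Suc (Suc n)) \<ge> cf_q \<omega> (Suc n) + cf_q \<omega> n"
proof -
  assume h: "\<omega> \<notin> \<rat>"
  have "cf_a \<omega> (Suc (Suc n)) \<ge> 1" using cf_a_ge1[OF h] by simp
  hence "cf_a \<omega> (Suc (Suc n)) * cf_q \<omega> (Suc n) \<ge> cf_q \<omega> (Suc n)" by simp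
  thus ?thesis by simp
qed

lemma cf_q_Suc_ge: "\<omega> \<notin> \<rat> \<Longrightarrow> cf_q \<omega> (Suc n) \<ge> cf_q \<omega> n"
proof (cases n)
  case 0
  assume h: "\<omega> \<notin> \<rat>" thus ?thesis using 0 cf_a_ge1[OF h, of 1] by auto
next
  case (Suc m)
  assume h: "\<omega> \<notin> \<rat>" thus ?thesis using Suc cf_q_grow[OF h, of m] by (simp del: cf_q.simps)
qed

lemma cf_q_mono: "\<omega> \<notin> \<rat> \<Longrightarrow> m \<le> n \<Longrightarrow> cf_q \<omega> m \<le> cf_q \<omega> n"
  using cf_q_Suc_ge[of \<omega>] by (rule lift_Suc_mono_le) 

lemma cf_q_ge_n: "\<omega> \<notin> \<rat> \<Longrightarrow> cf_q \<omega> n \<ge> n"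
proof (induction n rule: nat_less_induct)
  case (1 n)
  show ?case
  proof (cases n)
    case 0 then show ?thesis by simp
  next
    case (Suc m)
    show ?thesis
    proof (cases m)
      case 0 then show ?thesis using Suc cf_q_ge1[OF "1.prems", of 1] by simp
    next
      case (Suc k)
      have "cf_q \<omega> (Suc k) \<ge> Suc k" using 1 Suc `n = Suc m` by auto
      moreover have "cf_q \<omega> k \<ge> 1" using cf_q_ge1[OF "1.prems"] by simp
      ultimately show ?thesis using cf_q_grow[OF "1.prems", of k] Suc `n = Suc m` by (simp del: cf_q.simps)
    qed
  qed
qed

lemma cf_q_ge2: "\<omega> \<notin> \<rat> \<Longrightarrow> n \<ge> 2 \<Longrightarrow> cf_q \<omega> n \<ge> 2"
  using cf_q_ge_n[of \<omega> n] by simp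

lemma cf_k_prop:
  assumes h: "\<omega> \<notin> \<rat>" and N: "N \<ge> 1"
  shows "cf_q \<omega> (cf_k \<omega> N) \<le> N \<and> N < cf_q \<omega> (Suc (cf_k \<omega> N))"
proof -
  have ex: "\<exists>k. cf_q \<omega> k \<le> N \<and> N < cf_q \<omega> (Suc k)"
  proof (rule ccontr)
    assume "\<not> ?thesis"
    hence st: "\<And>k. cf_q \<omega> k \<le> N \<Longrightarrow> cf_q \<omega> (Suc k) \<le> N" by (meson not_le)
    have "\<And>k. cf_q \<omega> k \<le> N"
    proof -
      fix k show "cf_q \<omega> k \<le> N" by (induction k) (use N st in auto)
    qed
    moreover have "cf_q \<omega> (Suc N) \<ge> Suc N" by (rule cf_q_ge_n[OF h])
    ultimately show False by (metis not_less_eq_eq)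
  qed
  have uniq: "k1 = k2" if "cf_q \<omega> k1 \<le> N \<and> N < cf_q \<omega> (Suc k1)"
      "cf_q \<omega> k2 \<le> N \<and> N < cf_q \<omega> (Suc k2)" for k1 k2
  proof (rule ccontr)
    assume "k1 \<noteq> k2"
    hence "Suc k1 \<le> k2 \<or> Suc k2 \<le> k1" by linarith
    thus False using that cf_q_mono[OF h] by (meson leD le_less_trans)
  qed
  from ex uniq have "\<exists>!k. cf_q \<omega> k \<le> N \<and> N < cf_q \<omega> (Suc k)" by blast
  thus ?thesis unfolding cf_k_def by (rule theI')
qed

lemma cf_k_idx:
  assumes h: "\<omega> \<notin> \<rat>" and N: "N \<ge> 1" and m: "cf_q \<omega> m \<le> N"
  shows "m \<le> cf_k \<omega> N"
proof (rule ccontr)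
  assume "\<not> ?thesis"
  hence "Suc (cf_k \<omega> N) \<le> m" by simp
  hence "cf_q \<omega> (Suc (cf_k \<omega> N)) \<le> cf_q \<omega> m" by (rule cf_q_mono[OF h])
  thus False using cf_k_prop[OF h N] m by linarith
qed

lemma cf_k_ge:
  assumes h: "\<omega> \<notin> \<rat>" and N: "N \<ge> cf_q \<omega> i"
  shows "i \<le> cf_k \<omega> N"
  using cf_k_idx[OF h _ N] cf_q_ge1[OF h, of i] N by simp


lemma cf_rem_shift: "cf_rem \<omega>' i = cf_rem \<omega> j \<Longrightarrow> cf_rem \<omega>' (i+n) = cf_rem \<omega> (j+n)"
  by (induction n) auto

lemma rec_compare:
  fixes x y c :: "nat \<Rightarrow> nat"
  assumes rx: "\<And>n. x (Suc (Suc n)) = c n * x (Suc n) + x n"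
    and ry: "\<And>n. y (Suc (Suc n)) = c n * y (Suc n) + y n"
    and b0: "x 0 \<le> C * y 0" and b1: "x 1 \<le> C * y 1"
  shows "x n \<le> C * y n"
proof -
  have "x n \<le> C * y n \<and> x (Suc n) \<le> C * y (Suc n)"
  proof (induction n)
    case 0 then show ?case using b0 b1 by simp
  next
    case (Suc n)
    have "c n * x (Suc n) \<le> c n * (C * y (Suc n))" using Suc by simp
    hence "x (Suc (Suc n)) \<le> c n * (C * y (Suc n)) + C * y n" using Suc rx[of n] by linarith
    also have "\<dots> = C * y (Suc (Suc n))" using ry[of n] by (simp add: algebra_simps)
    finally show ?case using Suc by simp
  qed
  thus ?thesis by simp
qed

lemma key_ineq:
  fixes X0 X1 Y0 Y1 C :: real
  assumes "X1 \<le> C * Y1" "Y0 \<le> C * X0" "X0 \<ge> 1" "Y0 \<ge> 1" "Y1 \<ge> 2" "C \<ge> 1" "X1 \<ge> 1"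
  shows "ln X1 / X0 \<le> (C * (1 + ln C / ln 2)) * (ln Y1 / Y0)"
proof -
  have l2: "ln 2 > (0::real)" by simp
  have lY: "ln Y1 \<ge> ln 2" using assms by simp
  have lC: "ln C \<ge> 0" using assms by simp
  have "ln X1 \<le> ln (C * Y1)" using assms by simp
  also have "\<dots> = ln C + ln Y1" using assms by (simp add: ln_mult)
  also have "ln C \<le> (ln C / ln 2) * ln Y1"
  proof -
    have "(ln C / ln 2) * ln Y1 \<ge> (ln C / ln 2) * ln 2"
      using lY lC l2 by (intro mult_left_mono) auto
    thus ?thesis using l2 by simp
  qed
  hence "ln C + ln Y1 \<le> (1 + ln C / ln 2) * ln Y1" by (simp add: algebra_simps)
  finally have h1: "ln X1 \<le> (1 + ln C / ln 2) * ln Y1" by simp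
  define E where "E = (1 + ln C / ln 2) * ln Y1"
  have E0: "E \<ge> 0" unfolding E_def using lC l2 lY by (intro mult_nonneg_nonneg add_nonneg_nonneg divide_nonneg_pos) linarith+
  have "ln X1 / X0 \<le> E / X0" using h1 assms unfolding E_def by (simp add: divide_right_mono)
  also have "\<dots> \<le> E * C / Y0"
  proof -
    have "1 / X0 \<le> C / Y0" using assms by (simp add: field_simps)
    hence "E * (1 / X0) \<le> E * (C / Y0)" using E0 by (rule mult_left_mono)
    thus ?thesis by simp
  qed
  also have "\<dots> = (C * (1 + ln C / ln 2)) * (ln Y1 / Y0)" unfolding E_def by simp
  finally show ?thesis .
qed


lemma T_nonneg: "\<omega> \<notin> \<rat> \<Longrightarrow> ln (real (cf_q \<omega> (Suc t))) / real (cf_q \<omega> t) \<ge> 0"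
  using cf_q_ge1[of \<omega>] by (intro divide_nonneg_nonneg) auto

lemma tail_bruno:
  assumes irr: "\<omega> \<notin> \<rat>" and irr': "\<omega>' \<notin> \<rat>" and i: "i \<ge> 1" and j: "j \<ge> 1"
    and eq: "cf_rem \<omega>' i = cf_rem \<omega> j" and s: "s > 0" and br: "bruno_s s \<omega>"
  shows "\<exists>s'>0. bruno_s s' \<omega>'"
proof -
  define T where "T = (\<lambda>w t. ln (real (cf_q w (Suc t))) / real (cf_q w t))"
  have T0: "T w t \<ge> 0" if "w \<notin> \<rat>" for w t unfolding T_def using T_nonneg[OF that] .
  have aeq: "cf_a \<omega>' (i+n) = cf_a \<omega> (j+n)" for n using cf_rem_shift[OF eq, of n] by (simp add: cf_a_def)
  define x where "x = (\<lambda>n. cf_q \<omega>' (i+n))"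
  define y where "y = (\<lambda>n. cf_q \<omega> (j+n))"
  define c where "c = (\<lambda>n. cf_a \<omega> (j + Suc (Suc n)))"
  have rx: "x (Suc (Suc n)) = c n * x (Suc n) + x n" for n
  proof -
    have "x (Suc (Suc n)) = cf_q \<omega>' (Suc (Suc (i+n)))" by (simp add: x_def)
    also have "\<dots> = cf_a \<omega>' (Suc (Suc (i+n))) * cf_q \<omega>' (Suc (i+n)) + cf_q \<omega>' (i+n)" by simp
    also have "cf_a \<omega>' (Suc (Suc (i+n))) = c n" using aeq[of "Suc (Suc n)"] by (simp add: c_def)
    finally show ?thesis by (simp add: x_def)
  qed
  have ry: "y (Suc (Suc n)) = c n * y (Suc n) + y n" for n
  proof -
    have "y (Suc (Suc n)) = cf_q \<omega> (Suc (Suc (j+n)))" by (simp add: y_def)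
    also have "\<dots> = cf_a \<omega> (Suc (Suc (j+n))) * cf_q \<omega> (Suc (j+n)) + cf_q \<omega> (j+n)" by simp
    also have "cf_a \<omega> (Suc (Suc (j+n))) = c n" by (simp add: c_def)
    finally show ?thesis by (simp add: y_def)
  qed
  define C where "C = max (max (x 0) (x 1)) (max (y 0) (y 1))"
  have x1: "x n \<ge> 1" for n unfolding x_def using cf_q_ge1[OF irr'] .
  have y1: "y n \<ge> 1" for n unfolding y_def using cf_q_ge1[OF irr] .
  have C1: "C \<ge> 1" unfolding C_def using x1[of 0] by simp
  have xC: "x n \<le> C * y n" if "n \<le> 1" for n
  proof -
    have "x n \<le> C" using that unfolding C_def by (cases n) auto
    also have "C \<le> C * y n" using y1[of n] by simp
    finally show ?thesis .
  qed
  have yC: "y n \<le> C * x n" if "n \<le> 1" for n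
  proof -
    have "y n \<le> C" using that unfolding C_def by (cases n) auto
    also have "C \<le> C * x n" using x1[of n] by simp
    finally show ?thesis .
  qed
  have xy: "x n \<le> C * y n" for n by (rule rec_compare[where x=x and y=y and c=c, OF rx ry]) (use xC in auto)
  have yx: "y n \<le> C * x n" for n by (rule rec_compare[where x=y and y=x and c=c, OF ry rx]) (use yC in auto)
  define D where "D = real C * (1 + ln (real C) / ln 2)"
  have D1: "D \<ge> 1"
  proof -
    have "ln (real C) / ln 2 \<ge> 0" using C1 by (intro divide_nonneg_pos) auto
    hence "real C * 1 \<le> real C * (1 + ln (real C) / ln 2)" by (intro mult_left_mono) auto
    thus ?thesis using C1 unfolding D_def by linarith
  qed
  have key: "T \<omega>' (i+n) \<le> D * T \<omega> (j+n)" for n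
  proof -
    have y2: "y (Suc n) \<ge> 2" unfolding y_def using cf_q_ge2[OF irr, of "j + Suc n"] j by simp
    have "ln (real (x (Suc n))) / real (x n) \<le> D * (ln (real (y (Suc n))) / real (y n))"
      unfolding D_def
      apply (rule key_ineq)
      using xy[of "Suc n"] yx[of n] x1[of n] y1[of n] y2 C1 x1[of "Suc n"]
      by (simp_all add: of_nat_mult[symmetric] del: of_nat_mult)
    thus ?thesis unfolding T_def x_def y_def by simp
  qed
  define A where "A = (\<Sum>t<i. T \<omega>' t)"
  have sums: "(\<Sum>t<i+K. T \<omega>' t) \<le> A + D * (\<Sum>t<j+K. T \<omega> t)" for K
  proof (induction K)
    case 0
    have "0 \<le> D * (\<Sum>t<j. T \<omega> t)" using D1 T0[OF irr] by (intro mult_nonneg_nonneg sum_nonneg) auto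
    then show ?case unfolding A_def by simp
  next
    case (Suc K)
    have "(\<Sum>t<i+Suc K. T \<omega>' t) = (\<Sum>t<i+K. T \<omega>' t) + T \<omega>' (i+K)" by simp
    also have "\<dots> \<le> A + D * (\<Sum>t<j+K. T \<omega> t) + D * T \<omega> (j+K)" using Suc key[of K] by linarith
    also have "\<dots> = A + D * (\<Sum>t<j+Suc K. T \<omega> t)" by (simp add: algebra_simps)
    finally show ?case .
  qed
  from br have "limsup (\<lambda>N::nat. ereal ((\<Sum>t=0..cf_k \<omega> N. T \<omega> t) - s * ln (real N))) < \<infinity>"
    unfolding bruno_s_def T_def by simp
  from limsup_finite_then_bounded[OF this] obtain B where B: "\<And>N. (\<Sum>t=0..cf_k \<omega> N. T \<omega> t) - s * ln (real N) \<le> B"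
    by blast
  define M where "M = A + D * B + D * s * ln (real C)"
  have bound: "(\<Sum>t=0..cf_k \<omega>' N. T \<omega>' t) - (D * s) * ln (real N) \<le> M"
    if N: "N \<ge> max 1 (cf_q \<omega>' i)" for N
  proof -
    define K' where "K' = cf_k \<omega>' N"
    have N1: "N \<ge> 1" using N by simp
    have K'i: "K' \<ge> i" unfolding K'_def using cf_k_ge[OF irr'] N by simp
    have "(\<Sum>t=0..K'. T \<omega>' t) = (\<Sum>t<i + (Suc K' - i). T \<omega>' t)"
      using K'i by (simp add: atLeast0AtMost lessThan_Suc_atMost[symmetric])
    also have "\<dots> \<le> A + D * (\<Sum>t<j + (Suc K' - i). T \<omega> t)" by (rule sums)
    also have "(\<Sum>t<j + (Suc K' - i). T \<omega> t) = (\<Sum>t=0..j + K' - i. T \<omega> t)"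
      using K'i by (simp add: atLeast0AtMost lessThan_Suc_atMost[symmetric] Suc_diff_le)
    also have "(\<Sum>t=0..j + K' - i. T \<omega> t) \<le> (\<Sum>t=0..cf_k \<omega> (C * N). T \<omega> t)"
    proof (rule sum_mono2)
      have "cf_q \<omega> (j + (K' - i)) \<le> C * cf_q \<omega>' (i + (K' - i))" using yx[of "K' - i"] by (simp add: x_def y_def)
      also have "i + (K' - i) = K'" using K'i by simp
      also have "C * cf_q \<omega>' K' \<le> C * N" using cf_k_prop[OF irr' N1] unfolding K'_def by simp
      finally have "cf_q \<omega> (j + K' - i) \<le> C * N" using K'i by (simp add: add_diff_assoc)
      moreover have "C * N \<ge> 1" using C1 N1 by simp
      ultimately have "j + K' - i \<le> cf_k \<omega> (C * N)" using cf_k_idx[OF irr] by blast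
      thus "{0..j + K' - i} \<subseteq> {0..cf_k \<omega> (C * N)}" by auto
    qed (use T0[OF irr] in auto)
    also have "(\<Sum>t=0..cf_k \<omega> (C * N). T \<omega> t) \<le> B + s * ln (real (C * N))" using B[of "C * N"] by simp
    also have "ln (real (C * N)) = ln (real C) + ln (real N)" using C1 N1 by (simp add: ln_mult)
    finally have "(\<Sum>t=0..K'. T \<omega>' t) \<le> A + D * (B + s * (ln (real C) + ln (real N)))"
      using D1 by (simp add: mult_left_mono)
    thus ?thesis unfolding M_def K'_def by (simp add: algebra_simps)
  qed
  have "limsup (\<lambda>N::nat. ereal ((\<Sum>t=0..cf_k \<omega>' N. T \<omega>' t) - (D * s) * ln (real N))) \<le> ereal M"
    unfolding eventually_sequentially
    by (rule Limsup_bounded, unfold eventually_sequentially, rule exI[of _ "max 1 (cf_q \<omega>' i)"])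
      (use bound in simp)
  hence "limsup (\<lambda>N::nat. ereal ((\<Sum>t=0..cf_k \<omega>' N. T \<omega>' t) - (D * s) * ln (real N))) < \<infinity>"
    by (rule le_less_trans) simp
  hence "bruno_s (D * s) \<omega>'" unfolding bruno_s_def T_def using irr' by simp
  moreover have "D * s > 0" using D1 s by simp
  ultimately show ?thesis by blast
qed


definition tail_eq :: "real \<Rightarrow> real \<Rightarrow> bool" where
  "tail_eq x y \<longleftrightarrow> (\<exists>i j. cf_rem x i = cf_rem y j)"

lemma te_refl: "tail_eq x x"
  unfolding tail_eq_def by blast

lemma te_sym: "tail_eq x y \<Longrightarrow> tail_eq y x"
  unfolding tail_eq_def by metis

lemma te_trans: "tail_eq x y \<Longrightarrow> tail_eq y z \<Longrightarrow> tail_eq x z"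
proof -
  assume "tail_eq x y" "tail_eq y z"
  then obtain i j j' k where 1: "cf_rem x i = cf_rem y j" and 2: "cf_rem y j' = cf_rem z k"
    unfolding tail_eq_def by blast
  have "cf_rem x (i + j') = cf_rem y (j + j')" using cf_rem_shift[OF 1] .
  also have "\<dots> = cf_rem y (j' + j)" by (simp add: add.commute)
  also have "\<dots> = cf_rem z (k + j)" using cf_rem_shift[OF 2] .
  finally show ?thesis unfolding tail_eq_def by blast
qed

lemma cf_rem_rat: "(x::real) \<in> \<rat> \<Longrightarrow> cf_rem x n \<in> \<rat>"
proof (induction n)
  case 0 then show ?case by simp
next
  case (Suc n)
  hence "frac (cf_rem x n) \<in> \<rat>" unfolding frac_def by (intro Rats_diff) auto
  hence "1 / frac (cf_rem x n) \<in> \<rat>" by (intro Rats_divide) auto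
  then show ?case by simp
qed

lemma te_irr: "tail_eq x y \<Longrightarrow> y \<notin> \<rat> \<Longrightarrow> x \<notin> \<rat>"
  unfolding tail_eq_def using cf_rem_rat cf_rem_irr by metis

lemma te_add_int: "tail_eq (y + of_int k) y"
proof -
  have "cf_rem (y + of_int k) 1 = cf_rem y 1" by (simp add: frac_add_of_int_right)
  thus ?thesis unfolding tail_eq_def by blast
qed

lemma frac_minus1: "frac (x - 1) = frac (x::real)"
  using frac_1_eq[of "x - 1"] by simp

lemma te_neg:
  assumes irr: "y \<notin> \<rat>"
  shows "tail_eq (- y) y"
proof -
  define f where "f = frac y"
  have f0: "0 < f" "f < 1" unfolding f_def using irr_not_int[OF irr] frac_lt_1 by auto
  have fh: "f \<noteq> 1/2"
  proof
    assume "f = 1/2"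
    hence "y = of_int \<lfloor>y\<rfloor> + 1/2" unfolding f_def frac_def by simp
    moreover have "of_int \<lfloor>y\<rfloor> + 1/2 \<in> \<rat>" by (intro Rats_add Rats_divide) auto
    ultimately have "y \<in> \<rat>" by metis
    thus False using irr by simp
  qed
  have fn: "frac (- y) = 1 - f" unfolding f_def using irr_not_int[OF irr] by (simp add: frac_neg)
  have r1: "cf_rem (- y) (Suc 0) = 1 / (1 - f)" using fn by simp
  have s1: "cf_rem y (Suc 0) = 1 / f" unfolding f_def by simp
  show ?thesis
  proof (cases "f < 1/2")
    case True
    have u: "frac (1 / (1 - f)) = f / (1 - f)"
      unfolding frac_unique_iff using True f0
      by (auto simp: field_simps)
    have "cf_rem (- y) (Suc (Suc 0)) = (1 - f) / f" using r1 u by simp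
    also have "\<dots> = 1 / f - 1" using f0 by (simp add: field_simps)
    finally have "cf_rem (- y) (Suc (Suc (Suc 0))) = 1 / frac (1 / f - 1)" by simp
    also have "\<dots> = cf_rem y (Suc (Suc 0))" using s1 by (simp add: frac_minus1)
    finally show ?thesis unfolding tail_eq_def by blast
  next
    case False
    hence F: "f > 1/2" using fh by simp
    have v: "frac (1 / f) = (1 - f) / f"
      unfolding frac_unique_iff using F f0
      by (auto simp: field_simps)
    have s2: "cf_rem y (Suc (Suc 0)) = f / (1 - f)" using s1 v by simp
    have "cf_rem (- y) (Suc 0) = f / (1 - f) + 1" using r1 f0 by (simp add: field_simps)
    hence "cf_rem (- y) (Suc (Suc 0)) = 1 / frac (f / (1 - f) + 1)" by simp
    also have "\<dots> = cf_rem y (Suc (Suc (Suc 0)))" using s2 by (simp add: frac_1_eq)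
    finally show ?thesis unfolding tail_eq_def by blast
  qed
qed

lemma te_inv_pos:
  assumes irr: "y \<notin> \<rat>" and pos: "y > 0"
  shows "tail_eq (1 / y) y"
proof -
  have y1: "y \<noteq> 1" using irr by auto
  show ?thesis
  proof (cases "y < 1")
    case True
    have "cf_rem (1 / y) 0 = cf_rem y 1" using True pos by (simp add: frac_eq)
    thus ?thesis unfolding tail_eq_def by blast
  next
    case False
    hence "y > 1" using y1 by simp
    hence "cf_rem (1 / y) 1 = cf_rem y 0" by (simp add: frac_eq)
    thus ?thesis unfolding tail_eq_def by blast
  qed
qed

lemma te_inv:
  assumes irr: "y \<notin> \<rat>"
  shows "tail_eq (1 / y) y"
proof (cases "y > 0")
  case True then show ?thesis using te_inv_pos[OF irr] by simp
next
  case False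
  have y0: "y \<noteq> 0" using irr by auto
  hence neg: "- y > 0" using False by simp
  have t1: "tail_eq (- y) y" by (rule te_neg[OF irr])
  have i1: "- y \<notin> \<rat>" by (rule te_irr[OF t1 irr])
  have t2: "tail_eq (1 / (- y)) (- y)" by (rule te_inv_pos[OF i1 neg])
  have i2: "1 / (- y) \<notin> \<rat>" by (rule te_irr[OF t2 i1])
  have t3: "tail_eq (- (1 / (- y))) (1 / (- y))" by (rule te_neg[OF i2])
  have "tail_eq (- (1 / (- y))) y" using te_trans[OF t3 te_trans[OF t2 t1]] .
  thus ?thesis by simp
qed

lemma te_S:
  assumes irr: "y \<notin> \<rat>"
  shows "tail_eq (- 1 / y) y"
proof -
  have t1: "tail_eq (1 / y) y" by (rule te_inv[OF irr])
  have i1: "1 / y \<notin> \<rat>" by (rule te_irr[OF t1 irr])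
  have "tail_eq (- (1 / y)) y" using te_trans[OF te_neg[OF i1] t1] .
  thus ?thesis by simp
qed


lemma te_mobius_aux:
  assumes irr: "y \<notin> \<rat>"
  shows "\<forall>a b c d. nat \<bar>c\<bar> = n \<longrightarrow> a * d - b * c = 1 \<longrightarrow>
     tail_eq ((of_int a * y + of_int b) / (of_int c * y + of_int d)) y"
proof (induction n rule: less_induct)
  case (less n)
  show ?case
  proof (intro allI impI)
    fix a b c d :: int
    assume cn: "nat \<bar>c\<bar> = n" and det: "a * d - b * c = 1"
    show "tail_eq ((of_int a * y + of_int b) / (of_int c * y + of_int d)) y"
    proof (cases "c = 0")
      case True
      hence "a * d = 1" using det by simp
      hence "(a = 1 \<and> d = 1) \<or> (a = -1 \<and> d = -1)" by (simp add: zmult_eq_1_iff)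
      thus ?thesis
      proof
        assume "a = 1 \<and> d = 1"
        thus ?thesis using True te_add_int[of y b] by simp
      next
        assume "a = -1 \<and> d = -1"
        hence "(of_int a * y + of_int b) / (of_int c * y + of_int d) = y + of_int (- b)"
          using True by (simp add: field_simps)
        thus ?thesis using te_add_int[of y "- b"] by simp
      qed
    next
      case False
      define k where "k = a div c"
      define r where "r = a mod c"
      have a_eq: "a = k * c + r" unfolding k_def r_def by simp
      have rc: "nat \<bar>r\<bar> < n" using abs_mod_less[OF False, of a] cn unfolding r_def by simp
      have det': "(- c) * (b - k * d) - (- d) * r = 1"
        using det unfolding a_eq by (simp add: algebra_simps)
      define hy where "hy = (of_int (- c) * y + of_int (- d)) / (of_int r * y + of_int (b - k * d))"
      have IH0: "(- c) * (b - k * d) - (- d) * r = 1 \<longrightarrow> tail_eq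
          ((of_int (- c) * y + of_int (- d)) / (of_int r * y + of_int (b - k * d))) y"
        using less.IH[OF rc] by blast
      have IH: "tail_eq hy y" using IH0 det' unfolding hy_def by blast
      have ihr: "hy \<notin> \<rat>" by (rule te_irr[OF IH irr])
      have P: "of_int c * y + of_int d \<noteq> 0"
      proof
        assume "of_int c * y + of_int d = 0"
        hence "y = - of_int d / of_int c" using False by (simp add: field_simps)
        moreover have "- of_int d / of_int c \<in> \<rat>" by (intro Rats_divide Rats_minus_iff[THEN iffD2]) auto
        ultimately show False using irr by metis
      qed
      define Pv where "Pv = of_int c * y + of_int d"
      define Qv where "Qv = of_int r * y + of_int (b - k * d)"
      have num: "of_int a * y + of_int b = of_int k * Pv + (Qv::real)"
        unfolding Pv_def Qv_def a_eq by (simp add: algebra_simps)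
      have hyv: "hy = - Pv / Qv" unfolding hy_def Pv_def Qv_def by (simp add: algebra_simps)
      have ident: "(of_int a * y + of_int b) / (of_int c * y + of_int d) = - 1 / hy + of_int k"
      proof (cases "Qv = 0")
        case True
        thus ?thesis using P unfolding num hyv Pv_def[symmetric] by simp
      next
        case False
        thus ?thesis using P unfolding num hyv Pv_def[symmetric] by (simp add: field_simps)
      qed
      have t1: "tail_eq (- 1 / hy) hy" by (rule te_S[OF ihr])
      have t2: "tail_eq (- 1 / hy + of_int k) (- 1 / hy)" by (rule te_add_int)
      show ?thesis unfolding ident using te_trans[OF t2 te_trans[OF t1 IH]] .
    qed
  qed
qed

theorem mainTheorem7:
  fixes a b c d :: int and \<omega> :: real
  assumes "a * d - b * c = 1"
    and "\<omega> \<in> bruno_set"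
  shows "(of_int a * \<omega> + of_int b) / (of_int c * \<omega> + of_int d) \<in> bruno_set"
proof -
  from assms(2) obtain s where s: "s > 0" and br: "bruno_s s \<omega>"
    unfolding bruno_set_def by blast
  have irr: "\<omega> \<notin> \<rat>" using br unfolding bruno_s_def by simp
  define w where "w = (of_int a * \<omega> + of_int b) / (of_int c * \<omega> + of_int d)"
  have te: "tail_eq w \<omega>" unfolding w_def using te_mobius_aux[OF irr] assms(1) by blast
  have irr': "w \<notin> \<rat>" by (rule te_irr[OF te irr])
  from te obtain i j where eq: "cf_rem w i = cf_rem \<omega> j" unfolding tail_eq_def by blast
  have eq1: "cf_rem w (i + 1) = cf_rem \<omega> (j + 1)" by (rule cf_rem_shift[OF eq])
  obtain s' where "s' > 0" "bruno_s s' w"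
    using tail_bruno[OF irr irr' _ _ eq1 s br] by auto
  thus ?thesis unfolding bruno_set_def w_def[symmetric] by blast
qed

end
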